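(* Let $k\ge3$, $r\ge0$ and $n=3^k-1+2r$. Let $M$ be the closed surface carrying the polyhedral map $D_{\{2k,2k\}}(n)$. Then $M$ is orientable if $r$ is even and non-orientable if $r$ is odd.
   Context: Vertex set $\mathbb{Z}_n$; integers are read modulo $n$. Define $w_0=0$. Then successively subtract $3^{k-1}+r$ twice, then $3^{k-2}$ twice, $3^{k-3}$ twice, ..., and finally $3$ twice. This gives vertices $w_1,\dots,w_{2k-2}$, and one checks $w_{2k-2}\equiv 2\pmod n$. Let $P$ be the $2k$-gon with cyclically ordered boundary vertices $(0,w_1,\dots,w_{2k-3},2,1)$. The map $D_{\{2k,2k\}}(n)$ is the 2-dimensional cell complex whose 2-cells are the $n$ translates $P+i$, $i\in\mathbb{Z}_n$. It is a known standing fact (Datta) that this is a $\{2k,2k\}$-equivelar polyhedral map on a closed surface $M$: every 2-cell is a $2k$-gon, every vertex has degree $2k$, and any two 2-cells meet in the empty set, a common vertex, or a common edge. *)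

theory Defs
  imports Main
begin

text \<open>The map D_{2k,2k}(n) with n = 3^k - 1 + 2r, vertex set Z_n represented
  by the integers 0..n-1 (all vertex labels are reduced mod n).\<close>

definition D_n :: "nat \<Rightarrow> nat \<Rightarrow> int" where
  "D_n k r = 3 ^ k - 1 + 2 * int r"

definition D_steps :: "nat \<Rightarrow> nat \<Rightarrow> int list" where
  "D_steps k r = [3 ^ (k - 1) + int r, 3 ^ (k - 1) + int r] @
     concat (map (\<lambda>j. [3 ^ j, 3 ^ j]) (rev [1..<k - 1]))"

definition D_w :: "nat \<Rightarrow> nat \<Rightarrow> nat \<Rightarrow> int" where
  "D_w k r m = (- sum_list (take m (D_steps k r))) mod D_n k r"

definition D_P :: "nat \<Rightarrow> nat \<Rightarrow> int list" where
  "D_P k r = [0] @ map (D_w k r) [1..<2 * k - 2] @ [2, 1]"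

definition D_face :: "nat \<Rightarrow> nat \<Rightarrow> int \<Rightarrow> int list" where
  "D_face k r i = map (\<lambda>v. (v + i) mod D_n k r) (D_P k r)"

definition cyc_dedges :: "'a list \<Rightarrow> ('a \<times> 'a) set" where
  "cyc_dedges xs = {(xs ! j, xs ! ((j + 1) mod length xs)) | j. j < length xs}"

text \<open>A polygonal 2-complex with faces F i (i \<in> I) is (coherently) orientable if one
  can choose an orientation of every face so that no directed edge is traversed in
  the same direction by two distinct faces (i.e. each shared edge is traversed in
  opposite directions).\<close>
definition orientable_complex :: "'i set \<Rightarrow> ('i \<Rightarrow> 'a list) \<Rightarrow> bool" where
  "orientable_complex I F \<longleftrightarrow>
     (\<exists>ori :: 'i \<Rightarrow> bool.
        \<forall>i\<in>I. \<forall>j\<in>I. i \<noteq> j \<longrightarrow>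
          cyc_dedges (if ori i then F i else rev (F i)) \<inter>
          cyc_dedges (if ori j then F j else rev (F j)) = {})"

end

theory Submission imports Defs begin


lemma evcong: "(x::int) mod n = y mod n \<Longrightarrow> even n \<Longrightarrow> even x = even y"
proof -
  assume "x mod n = y mod n" "even n"
  then have "n dvd x - y" by (simp add: mod_eq_dvd_iff)
  then have "even (x - y)" using \<open>even n\<close> dvd_trans by blast
  then show ?thesis by simp
qed
lemma l2: "(s::nat) div 2 = t div 2 \<Longrightarrow> even s = even t \<Longrightarrow> s = t"
  by (metis div_mult_mod_eq odd_iff_mod_2_eq_one even_iff_mod_2_eq_zero)

lemma rev_dedge:
  assumes "(x,y) \<in> cyc_dedges (rev xs)" shows "(y,x) \<in> cyc_dedges xs"
proof -
  let ?L = "length xs"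
  from assms obtain j where j: "j < ?L" "x = rev xs ! j" "y = rev xs ! ((j+1) mod ?L)"
    unfolding cyc_dedges_def by auto
  define t where "t = ?L - 1 - ((j+1) mod ?L)"
  have tl: "t < ?L" using j(1) unfolding t_def by simp
  have t1: "(t+1) mod ?L = ?L - 1 - j"
  proof (cases "j + 1 < ?L")
    case True then show ?thesis unfolding t_def by simp
  next
    case False then have "j + 1 = ?L" using j(1) by simp
    then have "(j+1) mod ?L = 0" by simp
    then have "t = ?L - 1" unfolding t_def by simp
    then have "t + 1 = ?L" using j(1) by simp
    then show ?thesis using \<open>j + 1 = ?L\<close> by simp
  qed
  have jm: "(j+1) mod ?L < ?L" using j(1) by (intro mod_less_divisor) auto
  have "y = xs ! t" using jm unfolding j(3) t_def by (simp add: rev_nth)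
  moreover have "x = xs ! ((t+1) mod ?L)" using j(1) unfolding j(2) t1 by (simp add: rev_nth)
  ultimately show ?thesis using tl unfolding cyc_dedges_def by blast
qed

lemma rev_dedge':
  assumes "(x,y) \<in> cyc_dedges xs" shows "(y,x) \<in> cyc_dedges (rev xs)"
  using rev_dedge[of x y "rev xs"] assms by simp

lemma map_dedges:
  "cyc_dedges (map (\<lambda>v. (v + i) mod n) P) =
   {((P!s + i) mod n, (P!((s+1) mod length P) + i) mod n) | s. s < length P}"
proof -
  have h: "\<And>s. s < length P \<Longrightarrow> map (\<lambda>v. (v + i) mod n) P ! ((s+1) mod length P) = (P!((s+1) mod length P) + i) mod n"
  proof -
    fix s assume "s < length P"
    then have "(s+1) mod length P < length P" by (intro mod_less_divisor) auto
    then show "?thesis s" by (simp add: nth_map)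
  qed
  show ?thesis unfolding cyc_dedges_def length_map
    by (metis (lifting) h nth_map)
qed

lemma face_edge:
  assumes "e \<in> cyc_dedges (if ori then map (\<lambda>v. (v + i) mod n) P else rev (map (\<lambda>v. (v + i) mod n) P))"
  shows "\<exists>s < length P. (if ori then e else prod.swap e) =
     ((P!s + i) mod n, (P!((s+1) mod length P) + i) mod n)"
proof (cases ori)
  case True then show ?thesis using assms by (auto simp: map_dedges)
next
  case False
  obtain x y where e: "e = (x,y)" by fastforce
  have "(y,x) \<in> cyc_dedges (map (\<lambda>v. (v + i) mod n) P)"
    using assms False e rev_dedge by auto
  then show ?thesis using False e by (auto simp: map_dedges)
qed

lemma abstract_orientable:
  fixes P :: "int list" and d :: "nat \<Rightarrow> int" and n :: int
  assumes L: "length P = L" "L > 0"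
    and cong: "\<And>s. s < L \<Longrightarrow> P!((s+1) mod L) mod n = (P!s - d s) mod n"
    and dpos: "\<And>s. s < L \<Longrightarrow> 0 < d s \<and> 2 * d s < n"
    and dinj: "\<And>s t. s < L \<Longrightarrow> t < L \<Longrightarrow> d s = d t \<Longrightarrow> s div 2 = t div 2"
    and dodd: "\<And>s. s < L \<Longrightarrow> odd (d s)"
    and nev: "even n" and P0: "P!0 = 0"
    and F: "\<And>i. F i = map (\<lambda>v. (v + i) mod n) P"
  shows "orientable_complex {0..<n} F"
proof -
  have par: "s < L \<Longrightarrow> even (P!s) = even s" for s
  proof (induction s)
    case 0 then show ?case using P0 by simp
  next
    case (Suc s)
    then have sl: "s < L" by simp
    have "(Suc s) mod L = Suc s" using Suc.prems by simp
    then have "P!(Suc s) mod n = (P!s - d s) mod n" using cong[OF sl] by simp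
    then have "even (P!(Suc s)) = even (P!s - d s)" using nev by (rule evcong)
    moreover have "odd (d s)" using dodd sl .
    ultimately show ?case using Suc.IH[OF sl] by simp
  qed
  have E2: "(P!((s+1) mod L) + i) mod n = (P!s - d s + i) mod n" if "s < L" for s i
    using cong[OF that] by (metis mod_add_left_eq)
  show ?thesis unfolding orientable_complex_def
  proof (rule exI[of _ "\<lambda>i. even i"], intro ballI impI)
    fix i j :: int assume i: "i \<in> {0..<n}" and j: "j \<in> {0..<n}" and ij: "i \<noteq> j"
    show "cyc_dedges (if even i then F i else rev (F i)) \<inter> cyc_dedges (if even j then F j else rev (F j)) = {}"
    proof (rule ccontr)
      assume "\<not> ?thesis"
      then obtain e where e1: "e \<in> cyc_dedges (if even i then F i else rev (F i))"
        and e2: "e \<in> cyc_dedges (if even j then F j else rev (F j))" by blast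
      from face_edge[of e "even i" i n P] e1 F L obtain s where s: "s < L"
        "(if even i then e else prod.swap e) = ((P!s + i) mod n, (P!s - d s + i) mod n)"
        using E2 by (auto split: if_splits)
      from face_edge[of e "even j" j n P] e2 F L obtain t where t: "t < L"
        "(if even j then e else prod.swap e) = ((P!t + j) mod n, (P!t - d t + j) mod n)"
        using E2 by (auto split: if_splits)
      show False
      proof (cases "even i = even j")
        case True
        then have eq: "(P!s + i) mod n = (P!t + j) mod n" "(P!s - d s + i) mod n = (P!t - d t + j) mod n"
          using s t by (auto split: if_splits)
        have "n dvd (P!s + i) - (P!t + j)" "n dvd (P!s - d s + i) - (P!t - d t + j)"
          using eq by (simp_all add: mod_eq_dvd_iff)
        then have "n dvd ((P!s + i) - (P!t + j)) - ((P!s - d s + i) - (P!t - d t + j))"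
          by (rule dvd_diff)
        then have "n dvd d s - d t" by (simp add: algebra_simps)
        moreover have "0 < d s" "d s < n" "0 < d t" "d t < n" using dpos s(1) t(1) by force+
        ultimately have "d s = d t"
          by (metis dvd_imp_le_int mod_eq_dvd_iff mod_pos_pos_trivial less_le)
        then have dv: "s div 2 = t div 2" using dinj s(1) t(1) by blast
        have "even (P!s + i) = even (P!t + j)" using eq(1) nev by (rule evcong)
        then have "even s = even t" using par[OF s(1)] par[OF t(1)] True by auto
        then have "s = t" using dv l2 by blast
        then have "n dvd i - j" using eq(1) by (simp add: mod_eq_dvd_iff)
        then show False using i j ij
          by (metis atLeastLessThan_iff mod_eq_dvd_iff mod_pos_pos_trivial)
      next
        case False
        then have eq: "(P!s + i) mod n = (P!t - d t + j) mod n" "(P!s - d s + i) mod n = (P!t + j) mod n"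
          using s t by (auto split: if_splits)
        have "n dvd (P!s + i) - (P!t - d t + j)" "n dvd (P!s - d s + i) - (P!t + j)"
          using eq by (simp_all add: mod_eq_dvd_iff)
        then have "n dvd ((P!s + i) - (P!t - d t + j)) - ((P!s - d s + i) - (P!t + j))"
          by (rule dvd_diff)
        then have "n dvd d s + d t" by (simp add: algebra_simps)
        moreover have "0 < d s + d t" "d s + d t < n" using dpos[OF s(1)] dpos[OF t(1)] by linarith+
        ultimately show False using zdvd_not_zless by blast
      qed
    qed
  qed
qed

lemma abstract_nonorientable:
  fixes P :: "int list" and d :: "nat \<Rightarrow> int" and n a :: int
  assumes L: "length P = L" "L \<ge> 3"
    and cong: "\<And>s. s < L \<Longrightarrow> P!((s+1) mod L) mod n = (P!s - d s) mod n"
    and d0: "d 0 = a" "d 1 = a" and d1: "d (L-2) = 1" "d (L-1) = 1"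
    and a: "0 < a" "a < n" "even a"
    and F: "\<And>i. F i = map (\<lambda>v. (v + i) mod n) P"
  shows "\<not> orientable_complex {0..<n} F"
proof
  assume "orientable_complex {0..<n} F"
  then obtain ori where ori: "\<And>i j. i \<in> {0..<n} \<Longrightarrow> j \<in> {0..<n} \<Longrightarrow> i \<noteq> j \<Longrightarrow>
     cyc_dedges (if ori i then F i else rev (F i)) \<inter> cyc_dedges (if ori j then F j else rev (F j)) = {}"
    unfolding orientable_complex_def by blast
  define E where "E i s = ((P!s + i) mod n, (P!((s+1) mod L) + i) mod n)" for i :: int and s
  have Ein: "E i s \<in> cyc_dedges (F i)" if "s < L" for i s
    unfolding E_def F map_dedges L using that by blast
  have common: False if "i \<in> {0..<n}" "j \<in> {0..<n}" "i \<noteq> j" "ori i = ori j"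
      "s < L" "t < L" "E i s = E j t" for i j s t
  proof (cases "ori i")
    case True
    then show False using ori[OF that(1-3)] Ein[OF that(5), of i] Ein[OF that(6), of j] that by auto
  next
    case False
    obtain x y where xy: "E i s = (x,y)" by fastforce
    have "(y,x) \<in> cyc_dedges (rev (F i))" "(y,x) \<in> cyc_dedges (rev (F j))"
      using rev_dedge' Ein[OF that(5), of i] Ein[OF that(6), of j] xy that(7) by metis+
    then show False using ori[OF that(1-3)] False that(4) by auto
  qed
  have Lm: "L - 2 + 1 = L - 1" "L - 1 + 1 = L" using L by auto
  have alt: "ori (i+1) \<noteq> ori i" if "0 \<le> i" "i + 1 < n" for i
  proof
    assume h: "ori (i+1) = ori i"
    have c1: "P!(L-1) mod n = (P!(L-2) - 1) mod n" using cong[of "L-2"] d1 L Lm by simp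
    have c2: "P!0 mod n = (P!(L-1) - 1) mod n" using cong[of "L-1"] d1 L Lm by simp
    have "(P!(L-1) + (i+1)) mod n = ((P!(L-2) - 1) + (i+1)) mod n" using c1 by (metis mod_add_left_eq)
    also have "\<dots> = (P!(L-2) + i) mod n" by simp
    finally have e1: "(P!(L-2) + i) mod n = (P!(L-1) + (i + 1)) mod n" by simp
    have "(P!0 + (i+1)) mod n = ((P!(L-1) - 1) + (i+1)) mod n" using c2 by (metis mod_add_left_eq)
    also have "\<dots> = (P!(L-1) + i) mod n" by simp
    finally have e2: "(P!(L-1) + i) mod n = (P!0 + (i + 1)) mod n" by simp
    have "E i (L-2) = E (i+1) (L-1)" unfolding E_def using Lm e1 e2 by simp
    then show False using common[of i "i+1" "L-2" "L-1"] that h L by auto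
  qed
  have altn: "int m < n \<Longrightarrow> ori (int m) = (ori 0 = even m)" for m
  proof (induction m)
    case 0 then show ?case by simp
  next
    case (Suc m)
    then have "ori (int m + 1) \<noteq> ori (int m)" using alt[of "int m"] by simp
    then show ?case using Suc by (auto simp: add.commute)
  qed
  have "even (nat a)" using a(1,3) by (simp add: even_nat_iff)
  then have "ori a = ori 0" using altn[of "nat a"] a by simp
  moreover have "E 0 0 = E a 1"
  proof -
    have c1: "P!1 mod n = (P!0 - a) mod n" using cong[of 0] d0 L by simp
    have c2: "P!2 mod n = (P!1 - a) mod n" using cong[of 1] d0 L by (simp add: numeral_2_eq_2)
    have "(P!1 + a) mod n = ((P!0 - a) + a) mod n" using c1 by (metis mod_add_left_eq)
    then have "P!0 mod n = (P!1 + a) mod n" by simp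
    moreover have "(P!2 + a) mod n = ((P!1 - a) + a) mod n" using c2 by (metis mod_add_left_eq)
    then have "P!1 mod n = (P!2 + a) mod n" by simp
    moreover have "(0+1) mod L = 1" "(1+1) mod L = 2" using L by auto
    ultimately show ?thesis unfolding E_def by simp
  qed
  ultimately show False using common[of 0 a 0 1] a L by auto
qed



definition dd :: "nat \<Rightarrow> nat \<Rightarrow> nat \<Rightarrow> int" where
  "dd k r s = (if s div 2 = 0 then 3 ^ (k - 1) + int r else 3 ^ (k - 1 - s div 2))"

lemma concat_pairs:
  "length (concat (map (\<lambda>j. [f j, f j]) xs)) = 2 * length xs"
  "t < 2 * length xs \<Longrightarrow> concat (map (\<lambda>j. [f j, f j]) xs) ! t = f (xs ! (t div 2))"
proof -
  show "length (concat (map (\<lambda>j. [f j, f j]) xs)) = 2 * length xs"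
    by (induction xs) auto
  show "t < 2 * length xs \<Longrightarrow> concat (map (\<lambda>j. [f j, f j]) xs) ! t = f (xs ! (t div 2))"
  proof (induction xs arbitrary: t)
    case Nil then show ?case by simp
  next
    case (Cons x xs)
    show ?case
    proof (cases "t < 2")
      case True then show ?thesis by (cases t) (auto simp: nth_Cons')
    next
      case False
      define u where "u = t - 2"
      have u: "t = Suc (Suc u)" using False unfolding u_def by simp
      then have "u < 2 * length xs" using Cons.prems by simp
      then show ?thesis using Cons.IH[of u] u by simp
    qed
  qed
qed

lemma steps_len: "k \<ge> 3 \<Longrightarrow> length (D_steps k r) = 2 * k - 2"
  unfolding D_steps_def by (simp add: concat_pairs)


lemma steps_nth1: assumes "k \<ge> 3" "s < 2" shows "D_steps k r ! s = dd k r s"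
  using assms unfolding D_steps_def dd_def by (cases s) (auto simp: nth_Cons')

lemma steps_nth2: assumes "k \<ge> 3" "s < 2 * k - 2" "\<not> s < 2" shows "D_steps k r ! s = dd k r s"
proof -
  have False: "\<not> s < 2" by fact
  let ?xs = "rev [1..<k - 1]"
  have lx: "length ?xs = k - 2" by simp
  have t: "s - 2 < 2 * length ?xs" using assms False by simp
  have s2: "s = Suc (Suc (s - 2))" using False by simp
  have sd: "s div 2 = Suc ((s - 2) div 2)" by (subst s2) simp
  have "D_steps k r ! s = ([3 ^ (k - 1) + int r, 3 ^ (k - 1) + int r] @ concat (map (\<lambda>j. [3 ^ j, 3 ^ j]) ?xs)) ! Suc (Suc (s - 2))"
    unfolding D_steps_def by (subst s2) (rule refl)
  also have "\<dots> = concat (map (\<lambda>j. [3 ^ j, 3 ^ j]) ?xs) ! (s - 2)"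
    by simp
  also have "\<dots> = 3 ^ (?xs ! ((s - 2) div 2))" using concat_pairs(2)[OF t] by simp
  also have "?xs ! ((s - 2) div 2) = k - 1 - s div 2"
  proof -
    have m: "(s - 2) div 2 < k - 2" using t by simp
    have "?xs ! ((s - 2) div 2) = [1..<k - 1] ! (k - 2 - Suc ((s - 2) div 2))"
      using m by (simp add: rev_nth)
    also have "\<dots> = 1 + (k - 2 - Suc ((s - 2) div 2))" using m by (simp add: nth_upt)
    also have "\<dots> = k - 1 - s div 2" using m sd by linarith
    finally show ?thesis .
  qed
  finally show ?thesis unfolding dd_def using sd by simp
qed

lemma steps_nth: assumes "k \<ge> 3" "s < 2 * k - 2" shows "D_steps k r ! s = dd k r s"
  using steps_nth1[OF assms(1)] steps_nth2[OF assms] by blast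

lemma take_sum: assumes "k \<ge> 3" shows "s \<le> 2 * k - 2 \<Longrightarrow> sum_list (take s (D_steps k r)) = (\<Sum>t<s. dd k r t)"
proof (induction s)
  case 0 then show ?case by simp
next
  case (Suc s)
  then have sl: "s < length (D_steps k r)" using steps_len[OF assms] by simp
  have "take (Suc s) (D_steps k r) = take s (D_steps k r) @ [D_steps k r ! s]"
    using sl by (rule take_Suc_conv_app_nth)
  then show ?case using Suc steps_nth[OF assms, of s] by simp
qed

lemma partial_sum: assumes "k \<ge> 3"
  shows "1 \<le> m \<Longrightarrow> m \<le> k - 1 \<Longrightarrow>
    (\<Sum>t<2*m. dd k r t) = 2 * (3 ^ (k - 1) + int r) + 3 ^ (k - 1) - 3 ^ (k - m)"
proof (induction m)
  case 0 then show ?case by simp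
next
  case (Suc m)
  have split: "(\<Sum>t<2*Suc m. dd k r t) = (\<Sum>t<2*m. dd k r t) + dd k r (2*m) + dd k r (2*m+1)"
    by (simp add: algebra_simps)
  show ?case
  proof (cases "m = 0")
    case True
    then show ?thesis using split by (simp add: dd_def)
  next
    case False
    have d1: "dd k r (2*m) = 3 ^ (k - 1 - m)" "dd k r (2*m+1) = 3 ^ (k - 1 - m)"
      using False unfolding dd_def by auto
    have e: "k - m = Suc (k - Suc m)" using Suc.prems by simp
    have "(3::int) ^ (k - m) = 3 * 3 ^ (k - Suc m)" unfolding e by simp
    moreover have "k - 1 - m = k - Suc m" by simp
    ultimately show ?thesis using split d1 Suc.IH False Suc.prems by simp
  qed
qed

lemma total_sum: assumes "k \<ge> 3" shows "(\<Sum>t<2*k-2. dd k r t) = D_n k r - 2"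
proof -
  have "2 * k - 2 = 2 * (k - 1)" by simp
  then have "(\<Sum>t<2*k-2. dd k r t) = 2 * (3 ^ (k - 1) + int r) + 3 ^ (k - 1) - 3 ^ (k - (k - 1))"
    using partial_sum[OF assms, of "k-1" r] assms by simp
  moreover have "k - (k - 1) = 1" using assms by simp
  moreover have "(3::int) ^ k = 3 * 3 ^ (k - 1)"
    using assms by (metis Suc_pred' not_numeral_le_zero not_gr0 power_Suc le_zero_eq)
  ultimately show ?thesis unfolding D_n_def by simp
qed

lemma n_facts: assumes "k \<ge> 3" shows "D_n k r \<ge> 26" "even (D_n k r)" "(3::int) ^ k = 3 * 3 ^ (k - 1)"
    "(3::int) ^ (k - 1) \<ge> 9"
proof -
  show p: "(3::int) ^ k = 3 * 3 ^ (k - 1)"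
    using assms by (metis Suc_pred' not_numeral_le_zero not_gr0 power_Suc le_zero_eq)
  have "(3::int) ^ 2 \<le> 3 ^ (k - 1)" using assms by (intro power_increasing) auto
  then show "(3::int) ^ (k - 1) \<ge> 9" by simp
  then show "D_n k r \<ge> 26" unfolding D_n_def using p by simp
  show "even (D_n k r)" unfolding D_n_def by simp
qed

lemma Dw_eq: "D_w k r s = (- (\<Sum>t<s. dd k r t)) mod D_n k r" if "k \<ge> 3" "s \<le> 2 * k - 2"
  unfolding D_w_def using take_sum[OF that(1) that(2)] by simp

lemma P_len: "k \<ge> 3 \<Longrightarrow> length (D_P k r) = 2 * k"
  unfolding D_P_def by simp

lemma P_nth: assumes "k \<ge> 3" "s \<le> 2 * k - 2" shows "D_P k r ! s = D_w k r s"
proof (cases s)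
  case 0 then show ?thesis unfolding D_P_def D_w_def by simp
next
  case (Suc s')
  have "D_P k r ! s = (map (D_w k r) [1..<2 * k - 2] @ [2, 1]) ! s'"
    unfolding D_P_def Suc by simp
  show ?thesis
  proof (cases "s' < 2 * k - 3")
    case True
    then have "D_P k r ! s = D_w k r (1 + s')"
      using \<open>D_P k r ! s = _\<close> by (simp add: nth_append)
    then show ?thesis using Suc by simp
  next
    case False
    then have s': "s' = 2 * k - 3" using assms Suc by simp
    then have "D_P k r ! s = 2" using \<open>D_P k r ! s = _\<close> assms by (simp add: nth_append)
    moreover have "s = 2 * k - 2" using s' Suc assms by simp
    moreover have "D_w k r (2 * k - 2) = 2"
    proof -
      have "D_w k r (2 * k - 2) = (- (D_n k r - 2)) mod D_n k r"
        using Dw_eq[where s="2*k-2" and r=r and k=k] assms(1) total_sum[OF assms(1), of r] by simp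
      also have "\<dots> = (2 + (-1) * D_n k r) mod D_n k r" by simp
      also have "\<dots> = 2 mod D_n k r" by (rule mod_mult_self1)
      also have "\<dots> = 2" using n_facts(1)[OF assms(1), of r] by simp
      finally show ?thesis .
    qed
    ultimately show ?thesis by simp
  qed
qed

lemma P_last: assumes "k \<ge> 3" shows "D_P k r ! (2 * k - 1) = 1"
proof -
  define xs where "xs = map (D_w k r) [1..<2 * k - 2]"
  have e: "2 * k - 1 = Suc (length xs + 1)" using assms unfolding xs_def by simp
  have "D_P k r ! (2 * k - 1) = (xs @ [2, 1]) ! (length xs + 1)"
    unfolding D_P_def e xs_def by simp
  also have "\<dots> = [2,1] ! 1" by (rule nth_append_length_plus)
  finally show ?thesis by simp
qed

lemma P_2: assumes "k \<ge> 3" shows "D_P k r ! (2 * k - 2) = 2"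
proof -
  define xs where "xs = map (D_w k r) [1..<2 * k - 2]"
  have DP: "D_P k r = 0 # (xs @ [2, 1])" unfolding D_P_def xs_def by simp
  have e: "2 * k - 2 = Suc (length xs)" using assms unfolding xs_def by simp
  have "D_P k r ! (2 * k - 2) = (0 # (xs @ [2, 1])) ! Suc (length xs)"
    unfolding DP by (subst e) (rule refl)
  also have "\<dots> = 2" by simp
  finally show ?thesis .
qed

lemma dd_last: assumes "k \<ge> 3" shows "dd k r (2 * k - 2) = 1" "dd k r (2 * k - 1) = 1"
proof -
  have "(2 * k - 2) div 2 = k - 1" "(2 * k - 1) div 2 = k - 1" using assms by auto
  then show "dd k r (2 * k - 2) = 1" "dd k r (2 * k - 1) = 1" using assms unfolding dd_def by auto
qed

lemma P_cong: assumes "k \<ge> 3" "s < 2 * k"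
  shows "D_P k r ! ((s + 1) mod (2 * k)) mod D_n k r = (D_P k r ! s - dd k r s) mod D_n k r"
proof -
  consider "s < 2 * k - 2" | "s = 2 * k - 2" | "s = 2 * k - 1" using assms by linarith
  then show ?thesis
  proof cases
    case 1
    then have m: "(s + 1) mod (2 * k) = s + 1" using assms by simp
    have "D_P k r ! (s + 1) = (- (\<Sum>t<s+1. dd k r t)) mod D_n k r"
      using P_nth[OF assms(1), of "s+1" r] Dw_eq[OF assms(1), of "s+1" r] 1 by simp
    also have "\<dots> = (- (\<Sum>t<s. dd k r t) - dd k r s) mod D_n k r" by simp
    also have "\<dots> = ((- (\<Sum>t<s. dd k r t)) mod D_n k r - dd k r s) mod D_n k r"
      by (simp add: mod_diff_left_eq)
    also have "(- (\<Sum>t<s. dd k r t)) mod D_n k r = D_P k r ! s"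
      using P_nth[OF assms(1), of s r] Dw_eq[OF assms(1), of s r] 1 by simp
    finally show ?thesis unfolding m by simp
  next
    case 2
    then have m: "(s + 1) mod (2 * k) = 2 * k - 1" using assms by simp
    show ?thesis unfolding m using P_last[OF assms(1), of r] P_2[OF assms(1), of r] dd_last[OF assms(1), of r] 2
      by simp
  next
    case 3
    then have m: "(s + 1) mod (2 * k) = 0" using assms by simp
    show ?thesis unfolding m using P_last[OF assms(1), of r] dd_last[OF assms(1), of r] 3
      by (simp add: D_P_def)
  qed
qed

lemma dd_props: assumes "k \<ge> 3" "s < 2 * k"
  shows "0 < dd k r s" "2 * dd k r s < D_n k r"
proof -
  have nf: "(3::int) ^ k = 3 * 3 ^ (k - 1)" "(3::int) ^ (k - 1) \<ge> 9" using n_facts[OF assms(1)] by auto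
  have p: "(0::int) < 3 ^ (k - 1)" by simp
  show "0 < dd k r s" unfolding dd_def using p by (simp add: add_pos_nonneg)
  show "2 * dd k r s < D_n k r"
  proof (cases "s div 2 = 0")
    case True then show ?thesis unfolding dd_def D_n_def using nf by simp
  next
    case False
    then have "k - 1 - s div 2 \<le> k - 1" by simp
    then have pw: "(3::int) ^ (k - 1 - s div 2) \<le> 3 ^ (k - 1)" by (intro power_increasing) auto
    have "dd k r s = 3 ^ (k - 1 - s div 2)" using False unfolding dd_def by simp
    moreover have "D_n k r = 3 * 3 ^ (k - 1) - 1 + 2 * int r" unfolding D_n_def using nf by simp
    moreover have "(0::int) \<le> int r" by simp
    ultimately show ?thesis using pw nf by linarith
  qed
qed

lemma dd_inj: assumes "k \<ge> 3" "s < 2 * k" "t < 2 * k" "dd k r s = dd k r t"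
  shows "s div 2 = t div 2"
proof -
  have sk: "s div 2 \<le> k - 1" "t div 2 \<le> k - 1" using assms by auto
  have big: "(3::int) ^ (k - 1 - m) < 3 ^ (k - 1) + int r" if "m \<noteq> 0" "m \<le> k - 1" for m
  proof -
    have "(3::int) ^ (k - 1 - m) < 3 ^ (k - 1)" using that by (intro power_strict_increasing) auto
    moreover have "(0::int) \<le> int r" by simp
    ultimately show ?thesis by linarith
  qed
  have big2: "(3::int) ^ (k - 1 - m) \<noteq> 3 ^ (k - 1) + int r" "3 ^ (k - 1) + int r \<noteq> (3::int) ^ (k - 1 - m)"
    if "m \<noteq> 0" "m \<le> k - 1" for m using big[OF that] by auto
  show ?thesis
  proof (cases "s div 2 = 0"; cases "t div 2 = 0")
    assume "s div 2 \<noteq> 0" "t div 2 \<noteq> 0"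
    then have "(3::int) ^ (k - 1 - s div 2) = 3 ^ (k - 1 - t div 2)" using assms(4) unfolding dd_def by simp
    then have "k - 1 - s div 2 = k - 1 - t div 2" by (simp add: power_inject_exp)
    then show ?thesis using sk by linarith
  qed (use assms(4) big2 sk in \<open>auto simp: dd_def\<close>)
qed

lemma dd_odd: assumes "even r" shows "odd (dd k r s)"
  using assms unfolding dd_def by auto

lemma D_face_eq: "D_face k r i = map (\<lambda>v. (v + i) mod D_n k r) (D_P k r)"
  unfolding D_face_def by simp

theorem mainTheorem17:
  fixes k r :: nat
  assumes "k \<ge> 3"
  shows "orientable_complex {0..<D_n k r} (D_face k r) \<longleftrightarrow> even r"
proof
  assume o: "orientable_complex {0..<D_n k r} (D_face k r)"
  show "even r"
  proof (rule ccontr)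
    assume odd: "odd r"
    have "\<not> orientable_complex {0..<D_n k r} (D_face k r)"
    proof (rule abstract_nonorientable[where L="2*k" and d="dd k r" and a="3 ^ (k - 1) + int r"])
      show "length (D_P k r) = 2 * k" using P_len[OF assms] .
      show "2 * k \<ge> 3" using assms by simp
      show "\<And>s. s < 2 * k \<Longrightarrow> D_P k r ! ((s + 1) mod (2 * k)) mod D_n k r = (D_P k r ! s - dd k r s) mod D_n k r"
        using P_cong[OF assms] by blast
      show "dd k r 0 = 3 ^ (k - 1) + int r" "dd k r 1 = 3 ^ (k - 1) + int r" unfolding dd_def by auto
      show "dd k r (2 * k - 2) = 1" "dd k r (2 * k - 1) = 1" using dd_last[OF assms] by auto
      show "0 < (3::int) ^ (k - 1) + int r" by (simp add: add_pos_nonneg)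
      have "2 * ((3::int) ^ (k - 1) + int r) < D_n k r" using dd_props(2)[OF assms, of 0 r] assms
        unfolding dd_def by simp
      moreover have "0 < (3::int) ^ (k - 1) + int r" by (simp add: add_pos_nonneg)
      ultimately show "(3::int) ^ (k - 1) + int r < D_n k r" by (smt (verit))
      show "even ((3::int) ^ (k - 1) + int r)" using odd by simp
      show "\<And>i. D_face k r i = map (\<lambda>v. (v + i) mod D_n k r) (D_P k r)" by (rule D_face_eq)
    qed
    then show False using o by simp
  qed
next
  assume ev: "even r"
  show "orientable_complex {0..<D_n k r} (D_face k r)"
  proof (rule abstract_orientable[where L="2*k" and d="dd k r"])
    show "length (D_P k r) = 2 * k" using P_len[OF assms] .
    show "0 < 2 * k" using assms by simp
    show "\<And>s. s < 2 * k \<Longrightarrow> D_P k r ! ((s + 1) mod (2 * k)) mod D_n k r = (D_P k r ! s - dd k r s) mod D_n k r"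
      using P_cong[OF assms] by blast
    show "\<And>s. s < 2 * k \<Longrightarrow> 0 < dd k r s \<and> 2 * dd k r s < D_n k r"
      using dd_props[OF assms] by blast
    show "\<And>s t. s < 2 * k \<Longrightarrow> t < 2 * k \<Longrightarrow> dd k r s = dd k r t \<Longrightarrow> s div 2 = t div 2"
      using dd_inj[OF assms] by blast
    show "\<And>s. s < 2 * k \<Longrightarrow> odd (dd k r s)" using dd_odd[OF ev] by blast
    show "even (D_n k r)" using n_facts[OF assms] by simp
    show "D_P k r ! 0 = 0" unfolding D_P_def by simp
    show "\<And>i. D_face k r i = map (\<lambda>v. (v + i) mod D_n k r) (D_P k r)" by (rule D_face_eq)
  qed
qed

end
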